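(* In the Poisson bipole Aloha model described in the context, let $R_1$ be the distance from the typical transmitter $X_0=0$ to its closest receiver other than its own receiver $y_0$, and let $\psi$ be the optimal MAP of the typical node with spatial information $S=B_0(R_1)$ (the disk of radius $R_1$ centered at $0$). For $0\le\rho\le1$ let $$\xi(\rho)=\inf\left\{x\ge0:\ \frac{\rho}{x^{\beta}/(Tr^{\beta})+1-\rho}+I(\rho,B_0(x))<1\right\},\qquad I(\rho,B_0(x))=2\pi\lambda r^2\int_{x/r}^{\infty}\frac{\rho s}{s^{\beta}/T+1-\rho}{\rm d}s.$$ Then $\mathbb{P}^0(\psi>\rho)=\exp(-\lambda\pi\xi(\rho)^2)$ for $\rho<1$, and $\mathbb{P}^0(\psi=1)=\exp(-\lambda\pi\xi(1)^2)$.
   Context: Model: transmitters $\Phi=\{X_i\}$ form a homogeneous Poisson point process of intensity $\lambda$ on $\mathbb{R}^2$; receiver $y_i=X_i+r_i$ with $|r_i|=r$, angles i.i.d. uniform independent of $\Phi$; $\bar\Phi=\{y_i\}$; $\beta>2$, $T>0$. $\mathbb{P}^0$ is the Palm law under which a typical transmitter $X_0=0$ with receiver $y_0$ is added. With $b_{0j}=|y_j|^{\beta}/(Tr^{\beta})$, the optimal MAP with spatial information $S$ is the unique $\psi\in(0,1)$ solving $\frac1\psi=\sum_{y_j\in S,j\ne0}\frac1{1+b_{0j}-\psi}+\int_{\mathbb{R}^2\setminus S}\frac{\lambda\,{\rm d}y}{1+|y|^\beta/(Tr^\beta)-\psi}$ if $\sum_{y_j\in S,j\ne0}1/b_{0j}+\int_{\mathbb{R}^2\setminus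 S}\lambda\,{\rm d}y/(|y|^\beta/(Tr^\beta))>1$, and $\psi=1$ otherwise; for $S=B_0(R_1)$ this reads $\frac1\psi=\frac{1}{(R_1/r)^\beta/T+1-\psi}+2\pi\lambda r^2\int_{R_1/r}^\infty\frac{s}{s^\beta/T+1-\psi}{\rm d}s$. *)

theory Defs
  imports "HOL-Probability.Probability"
begin

text \<open>Poisson point process (simple, i.e. a random set of points) on a measurable space
  with intensity measure mu, given on a probability space M: for every measurable set A
  of finite intensity the number of points in A is a.s. finite and Poisson distributed
  with mean mu(A), and counts in finitely many pairwise disjoint such sets are independent.\<close>
definition poisson_pp :: "'w measure \<Rightarrow> 'a measure \<Rightarrow> ('w \<Rightarrow> 'a set) \<Rightarrow> bool" where
  "poisson_pp M mu N \<longleftrightarrow>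
     prob_space M \<and>
     (\<forall>\<omega>\<in>space M. N \<omega> \<subseteq> space mu) \<and>
     (\<forall>A\<in>sets mu. emeasure mu A < \<infinity> \<longrightarrow>
        (\<forall>k::nat. {\<omega>\<in>space M. finite (N \<omega> \<inter> A) \<and> card (N \<omega> \<inter> A) = k} \<in> sets M \<and>
           measure M {\<omega>\<in>space M. finite (N \<omega> \<inter> A) \<and> card (N \<omega> \<inter> A) = k}
             = measure mu A ^ k / fact k * exp (- measure mu A))) \<and>
     (\<forall>(I::nat set) A. finite I \<longrightarrow> disjoint_family_on A I \<longrightarrow>
        (\<forall>i\<in>I. A i \<in> sets mu \<and> emeasure mu (A i) < \<infinity>) \<longrightarrow>
        prob_space.indep_vars M (\<lambda>_. count_space UNIV) (\<lambda>i \<omega>. card (N \<omega> \<inter> A i)) I)"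

text \<open>Marked intensity of the bipole model: transmitter location x in R^2 (= complex plane)
  with intensity lam * Lebesgue, independent mark = receiver angle theta uniform on [0, 2 pi).\<close>
definition bipole_intensity :: "real \<Rightarrow> (complex \<times> real) measure" where
  "bipole_intensity lam = density (lborel \<Otimes>\<^sub>M lborel)
      (\<lambda>(x, \<theta>). ennreal (lam / (2 * pi)) * indicator {0..<2 * pi} \<theta>)"

definition receiver :: "real \<Rightarrow> complex \<times> real \<Rightarrow> complex" where
  "receiver r p = fst p + complex_of_real r * cis (snd p)"

definition bval :: "real \<Rightarrow> real \<Rightarrow> real \<Rightarrow> complex \<Rightarrow> real" where
  "bval T r \<beta> y = cmod y powr \<beta> / (T * r powr \<beta>)"

text \<open>Optimal MAP of the typical node with spatial information S, given the set Ys of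
  receivers y_j (j \<noteq> 0) of the other links.\<close>
definition opt_MAP :: "real \<Rightarrow> real \<Rightarrow> real \<Rightarrow> real \<Rightarrow> complex set \<Rightarrow> complex set \<Rightarrow> real" where
  "opt_MAP lam T r \<beta> Ys S =
     (if (\<Sum>y\<in>Ys \<inter> S. 1 / bval T r \<beta> y) + (LINT y:-S|lborel. lam / bval T r \<beta> y) > 1
      then (THE \<psi>. 0 < \<psi> \<and> \<psi> < 1 \<and>
              1 / \<psi> = (\<Sum>y\<in>Ys \<inter> S. 1 / (1 + bval T r \<beta> y - \<psi>))
                       + (LINT y:-S|lborel. lam / (1 + bval T r \<beta> y - \<psi>)))
      else 1)"

definition closest_rx :: "real \<Rightarrow> (complex \<times> real) set \<Rightarrow> real" where
  "closest_rx r P = Inf (cmod ` receiver r ` P)"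

text \<open>The MAP psi of the typical node with S = B_0(R_1) (closed disk) for the configuration P
  of the other marked transmitters.\<close>
definition psi_R1 :: "real \<Rightarrow> real \<Rightarrow> real \<Rightarrow> real \<Rightarrow> (complex \<times> real) set \<Rightarrow> real" where
  "psi_R1 lam T r \<beta> P = opt_MAP lam T r \<beta> (receiver r ` P) (cball 0 (closest_rx r P))"

definition I_fun :: "real \<Rightarrow> real \<Rightarrow> real \<Rightarrow> real \<Rightarrow> real \<Rightarrow> real \<Rightarrow> real" where
  "I_fun lam T r \<beta> \<rho> x =
     2 * pi * lam * r\<^sup>2 * (LINT s:{x / r<..}|lborel. \<rho> * s / (s powr \<beta> / T + 1 - \<rho>))"

text \<open>xi(rho); the infimum is taken over x > 0 (the defining set is upward
  closed, so this equals the infimum over x >= 0, and avoids the singular point x = 0, rho = 1).\<close>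
definition xi :: "real \<Rightarrow> real \<Rightarrow> real \<Rightarrow> real \<Rightarrow> real \<Rightarrow> real" where
  "xi lam T r \<beta> \<rho> =
     Inf {x. 0 < x \<and> \<rho> / (x powr \<beta> / (T * r powr \<beta>) + 1 - \<rho>) + I_fun lam T r \<beta> \<rho> x < 1}"

end

theory Submission
  imports Defs "HOL-Real_Asymp.Real_Asymp"
begin


lemma powr_set_integrable:
  fixes a e :: real
  assumes "e < -1" "a > 0"
  shows "set_integrable lborel {a<..} (\<lambda>s. s powr e)"
    and "(LINT s:{a<..}|lborel. s powr e) = -(a powr (e+1)) / (e+1)"
proof -
  have hi: "((\<lambda>x. x powr e) has_integral -(a powr (e+1)) / (e+1)) {a..}"
    by (rule has_integral_powr_to_inf[OF assms])
  have "((\<lambda>x. x powr e) has_integral -(a powr (e+1)) / (e+1)) {a<..}"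
    using hi by (subst has_integral_spike_set_eq[where T="{a..}"])
      (auto intro: negligible_subset[of "{a}"])
  then have int: "(\<lambda>x. x powr e) integrable_on {a<..}" and
    val: "integral {a<..} (\<lambda>x. x powr e) = -(a powr (e+1)) / (e+1)"
    by (auto simp: integrable_on_def integral_unique)
  have hI: "((\<lambda>x. x powr e) has_integral integral {a<..} (\<lambda>x. x powr e)) {a<..}"
    using int by (rule integrable_integral)
  have nn: "integral\<^sup>N lborel (\<lambda>x. indicator {a<..} x * x powr e) = ennreal (integral {a<..} (\<lambda>x. x powr e))"
    by (rule nn_integral_has_integral_lebesgue[OF _ hI]) auto
  show si: "set_integrable lborel {a<..} (\<lambda>s. s powr e)"
    unfolding set_integrable_def
  proof (rule integrableI_bounded)
    show "(\<lambda>x. indicator {a<..} x *\<^sub>R x powr e) \<in> borel_measurable lborel" by measurable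
    have "(\<integral>\<^sup>+ x. ennreal (norm (indicator {a<..} x *\<^sub>R x powr e)) \<partial>lborel)
        = integral\<^sup>N lborel (\<lambda>x. indicator {a<..} x * x powr e)"
      by (intro nn_integral_cong) (auto simp: indicator_def)
    then show "(\<integral>\<^sup>+ x. ennreal (norm (indicator {a<..} x *\<^sub>R x powr e)) \<partial>lborel) < \<infinity>"
      using nn by simp
  qed
  show "(LINT s:{a<..}|lborel. s powr e) = -(a powr (e+1)) / (e+1)"
    using set_borel_integral_eq_integral(2)[OF si] val by simp
qed

definition Jr :: "real \<Rightarrow> real \<Rightarrow> real \<Rightarrow> real \<Rightarrow> real" where
  "Jr T \<beta> a \<psi> = (LINT s:{a<..}|lborel. s / (s powr \<beta> / T + 1 - \<psi>))"

lemma den_pos: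
  fixes T \<beta> s \<psi> :: real
  assumes "0 < T" "0 < s" "\<psi> \<le> 1"
  shows "s powr \<beta> / T \<le> s powr \<beta> / T + 1 - \<psi>" "0 < s powr \<beta> / T + 1 - \<psi>"
proof -
  have "0 < s powr \<beta> / T" using assms by simp
  then show "s powr \<beta> / T \<le> s powr \<beta> / T + 1 - \<psi>" "0 < s powr \<beta> / T + 1 - \<psi>"
    using assms by linarith+
qed

lemma integrand_bound:
  fixes T \<beta> s \<psi> :: real
  assumes "0 < T" "0 < s" "\<psi> \<le> 1"
  shows "0 \<le> s / (s powr \<beta> / T + 1 - \<psi>)" "s / (s powr \<beta> / T + 1 - \<psi>) \<le> T * s powr (1 - \<beta>)"
proof -
  have p: "0 < s powr \<beta> / T" using assms by auto
  show "0 \<le> s / (s powr \<beta> / T + 1 - \<psi>)" using assms den_pos(2)[of T s \<psi> \<beta>] by auto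
  have d: "0 < s powr \<beta> / T + 1 - \<psi>" using den_pos(2)[of T s \<psi> \<beta>] assms by simp
  have "0 < (s powr \<beta> / T + 1 - \<psi>) * (s powr \<beta> / T)" using d p by (rule mult_pos_pos)
  then have "s / (s powr \<beta> / T + 1 - \<psi>) \<le> s / (s powr \<beta> / T)"
    using assms den_pos(1)[of T s \<psi> \<beta>] by (intro divide_left_mono) auto
  also have "\<dots> = T * s powr (1 - \<beta>)"
    using assms by (simp add: powr_diff field_simps)
  finally show "s / (s powr \<beta> / T + 1 - \<psi>) \<le> T * s powr (1 - \<beta>)" .
qed

lemma Jr_integrable:
  fixes T \<beta> a \<psi> :: real
  assumes "0 < T" "2 < \<beta>" "0 < a" "\<psi> \<le> 1"
  shows "set_integrable lborel {a<..} (\<lambda>s. s / (s powr \<beta> / T + 1 - \<psi>))"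
proof (rule set_integrable_bound)
  show "set_integrable lborel {a<..} (\<lambda>s. T * s powr (1 - \<beta>))"
    using powr_set_integrable(1)[of "1 - \<beta>" a] assms by (intro set_integrable_mult_right) auto
  show "set_borel_measurable lborel {a<..} (\<lambda>s. s / (s powr \<beta> / T + 1 - \<psi>))"
    unfolding set_borel_measurable_def by measurable
  show "AE x\<in>{a<..} in lborel. norm (x / (x powr \<beta> / T + 1 - \<psi>)) \<le> norm (T * x powr (1 - \<beta>))"
  proof (intro AE_I2 impI)
    fix x assume "x \<in> {a<..}"
    then have x: "0 < x" using assms by auto
    have "norm (x / (x powr \<beta> / T + 1 - \<psi>)) = x / (x powr \<beta> / T + 1 - \<psi>)"
      using den_pos(2)[of T x \<psi> \<beta>] x assms by simp
    also have "\<dots> \<le> T * x powr (1 - \<beta>)" using integrand_bound(2)[of T x \<psi> \<beta>] x assms by simp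
    also have "\<dots> = norm (T * x powr (1 - \<beta>))" using assms by simp
    finally show "norm (x / (x powr \<beta> / T + 1 - \<psi>)) \<le> norm (T * x powr (1 - \<beta>))" .
  qed
qed

lemma Jr_nonneg:
  fixes T \<beta> a \<psi> :: real
  assumes "0 < T" "2 < \<beta>" "0 < a" "\<psi> \<le> 1"
  shows "0 \<le> Jr T \<beta> a \<psi>"
  unfolding Jr_def set_lebesgue_integral_def using assms integrand_bound(1)[of T _ \<psi> \<beta>]
  by (intro Bochner_Integration.integral_nonneg) (auto simp: indicator_def)

lemma Jr_bound:
  fixes T \<beta> a \<psi> :: real
  assumes "0 < T" "2 < \<beta>" "0 < a" "\<psi> \<le> 1"
  shows "Jr T \<beta> a \<psi> \<le> T * (a powr (2 - \<beta>) / (\<beta> - 2))"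
proof -
  have "Jr T \<beta> a \<psi> \<le> (LINT s:{a<..}|lborel. T * s powr (1 - \<beta>))"
    unfolding Jr_def using assms integrand_bound[of T _ \<psi> \<beta>] powr_set_integrable(1)[of "1 - \<beta>" a]
    by (intro set_integral_mono Jr_integrable set_integrable_mult_right) auto
  also have "\<dots> = T * (LINT s:{a<..}|lborel. s powr (1 - \<beta>))"
    by (simp add: set_integral_mult_right)
  also have "\<dots> = T * (a powr (2 - \<beta>) / (\<beta> - 2))"
  proof -
    have "(LINT s:{a<..}|lborel. s powr (1 - \<beta>)) = - (a powr (1 - \<beta> + 1)) / (1 - \<beta> + 1)"
      using powr_set_integrable(2)[of "1 - \<beta>" a] assms by simp
    also have "\<dots> = a powr (2 - \<beta>) / (\<beta> - 2)"
      by (simp add: divide_simps) (simp add: algebra_simps)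
    finally show ?thesis by simp
  qed
  finally show ?thesis .
qed

lemma Jr_mono_psi:
  fixes T \<beta> a \<psi>1 \<psi>2 :: real
  assumes "0 < T" "2 < \<beta>" "0 < a" "\<psi>1 \<le> \<psi>2" "\<psi>2 \<le> 1"
  shows "Jr T \<beta> a \<psi>1 \<le> Jr T \<beta> a \<psi>2"
  unfolding Jr_def using assms
  using den_pos[of T _ \<psi>1 \<beta>] den_pos[of T _ \<psi>2 \<beta>]
  by (intro set_integral_mono Jr_integrable) (auto intro!: divide_left_mono mult_pos_pos)

lemma Jr_antimono:
  fixes T \<beta> a1 a2 \<psi> :: real
  assumes "0 < T" "2 < \<beta>" "0 < a1" "a1 \<le> a2" "\<psi> \<le> 1"
  shows "Jr T \<beta> a2 \<psi> \<le> Jr T \<beta> a1 \<psi>"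
proof -
  have i1: "set_integrable lborel {a1<..} (\<lambda>s. s / (s powr \<beta> / T + 1 - \<psi>))"
    using assms by (intro Jr_integrable) auto
  have i2: "set_integrable lborel {a2<..} (\<lambda>s. s / (s powr \<beta> / T + 1 - \<psi>))"
    using assms by (intro Jr_integrable) auto
  show ?thesis
    unfolding Jr_def set_lebesgue_integral_def
    using i1 i2 unfolding set_integrable_def
    apply (intro integral_mono)
      apply assumption+
    using assms integrand_bound[of T _ \<psi> \<beta>]
    by (auto simp: indicator_def)
qed

lemma pointwise_lip:
  fixes T \<beta> s \<psi>1 \<psi>2 :: real
  assumes "0 < T" "0 < s" "\<psi>1 \<le> 1" "\<psi>2 \<le> 1"
  shows "\<bar>s / (s powr \<beta> / T + 1 - \<psi>1) - s / (s powr \<beta> / T + 1 - \<psi>2)\<bar>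
         \<le> \<bar>\<psi>1 - \<psi>2\<bar> * (T\<^sup>2 * s powr (1 - 2 * \<beta>))"
proof -
  define u where "u = s powr \<beta> / T"
  have u: "0 < u" using assms by (simp add: u_def)
  have d1: "u \<le> u + 1 - \<psi>1" "0 < u + 1 - \<psi>1" using assms u by auto
  have d2: "u \<le> u + 1 - \<psi>2" "0 < u + 1 - \<psi>2" using assms u by auto
  have "s / (u + 1 - \<psi>1) - s / (u + 1 - \<psi>2) = s * (\<psi>1 - \<psi>2) / ((u + 1 - \<psi>1) * (u + 1 - \<psi>2))"
    using d1 d2 by (simp add: field_simps)
  then have "\<bar>s / (u + 1 - \<psi>1) - s / (u + 1 - \<psi>2)\<bar> = (s * \<bar>\<psi>1 - \<psi>2\<bar>) / ((u + 1 - \<psi>1) * (u + 1 - \<psi>2))"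
    using d1 d2 assms by (simp add: abs_mult)
  also have "\<dots> \<le> (s * \<bar>\<psi>1 - \<psi>2\<bar>) / (u * u)"
    using d1 d2 u assms by (intro divide_left_mono mult_mono mult_pos_pos) auto
  also have "\<dots> = \<bar>\<psi>1 - \<psi>2\<bar> * (T\<^sup>2 * s powr (1 - 2 * \<beta>))"
    using assms by (simp add: u_def powr_diff powr_add[symmetric] power2_eq_square field_simps)
  finally show ?thesis by (simp add: u_def)
qed

lemma Jr_lip:
  fixes T \<beta> a \<psi>1 \<psi>2 :: real
  assumes "0 < T" "2 < \<beta>" "0 < a" "\<psi>1 \<le> 1" "\<psi>2 \<le> 1"
  shows "\<bar>Jr T \<beta> a \<psi>1 - Jr T \<beta> a \<psi>2\<bar> \<le> (T\<^sup>2 * (LINT s:{a<..}|lborel. s powr (1 - 2 * \<beta>))) * \<bar>\<psi>1 - \<psi>2\<bar>"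
proof -
  let ?g = "\<lambda>\<psi> s. s / (s powr \<beta> / T + 1 - \<psi>)"
  have i1: "set_integrable lborel {a<..} (?g \<psi>1)" and i2: "set_integrable lborel {a<..} (?g \<psi>2)"
    using assms by (auto intro!: Jr_integrable)
  have ip: "set_integrable lborel {a<..} (\<lambda>s. s powr (1 - 2 * \<beta>))"
    using assms by (intro powr_set_integrable) auto
  have "Jr T \<beta> a \<psi>1 - Jr T \<beta> a \<psi>2 = (LINT s:{a<..}|lborel. ?g \<psi>1 s - ?g \<psi>2 s)"
    unfolding Jr_def using i1 i2 by (simp add: set_integral_diff)
  then have "\<bar>Jr T \<beta> a \<psi>1 - Jr T \<beta> a \<psi>2\<bar> = norm (LINT s:{a<..}|lborel. ?g \<psi>1 s - ?g \<psi>2 s)" by simp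
  also have "\<dots> \<le> (LINT s:{a<..}|lborel. norm (?g \<psi>1 s - ?g \<psi>2 s))"
    using i1 i2 by (intro set_integral_norm_bound set_integral_diff)
  also have "\<dots> \<le> (LINT s:{a<..}|lborel. \<bar>\<psi>1 - \<psi>2\<bar> * (T\<^sup>2 * s powr (1 - 2 * \<beta>)))"
    using i1 i2 ip assms pointwise_lip[of T _ \<psi>1 \<psi>2 \<beta>]
    by (intro set_integral_mono set_integrable_norm set_integral_diff set_integrable_mult_right) auto
  also have "\<dots> = (T\<^sup>2 * (LINT s:{a<..}|lborel. s powr (1 - 2 * \<beta>))) * \<bar>\<psi>1 - \<psi>2\<bar>"
    by (simp add: set_integral_mult_right)
  finally show ?thesis .
qed

lemma Jr_cont:
  fixes T \<beta> a :: real
  assumes "0 < T" "2 < \<beta>" "0 < a"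
  shows "continuous_on {..1} (Jr T \<beta> a)"
proof -
  define C where "C = T\<^sup>2 * (LINT s:{a<..}|lborel. s powr (1 - 2 * \<beta>))"
  have "lipschitz_on \<bar>C\<bar> {..1} (Jr T \<beta> a)"
  proof (rule lipschitz_onI)
    fix x y :: real assume "x \<in> {..1}" "y \<in> {..1}"
    then have "\<bar>Jr T \<beta> a x - Jr T \<beta> a y\<bar> \<le> C * \<bar>x - y\<bar>"
      using Jr_lip[of T \<beta> a x y] assms by (simp add: C_def)
    also have "\<dots> \<le> \<bar>C\<bar> * \<bar>x - y\<bar>" by (intro mult_right_mono) auto
    finally show "dist (Jr T \<beta> a x) (Jr T \<beta> a y) \<le> \<bar>C\<bar> * dist x y" by (simp add: dist_real_def)
  qed auto
  then show ?thesis by (rule lipschitz_on_continuous_on)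
qed



lemma phi_char:
  fixes b :: real and J :: "real \<Rightarrow> real"
  assumes b: "0 < b"
    and Jc: "continuous_on {0..1} J"
    and Jnn: "\<And>x. 0 \<le> x \<Longrightarrow> x \<le> 1 \<Longrightarrow> 0 \<le> J x"
    and Jmono: "\<And>x y. 0 \<le> x \<Longrightarrow> x \<le> y \<Longrightarrow> y \<le> 1 \<Longrightarrow> J x \<le> J y"
  defines "Phi \<equiv> (if 1 / b + J 1 > 1
                   then (THE \<psi>. 0 < \<psi> \<and> \<psi> < 1 \<and> 1 / \<psi> = 1 / (1 + b - \<psi>) + J \<psi>)
                   else 1)"
  shows "\<And>\<rho>. 0 \<le> \<rho> \<Longrightarrow> \<rho> < 1 \<Longrightarrow> (\<rho> < Phi \<longleftrightarrow> \<rho> / (b + 1 - \<rho>) + \<rho> * J \<rho> < 1)"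
    and "Phi = 1 \<longleftrightarrow> 1 / b + J 1 \<le> 1"
proof -
  define h where "h = (\<lambda>\<psi>. \<psi> / (1 + b - \<psi>) + \<psi> * J \<psi>)"
  have hmono: "h x < h y" if "0 \<le> x" "x < y" "y \<le> 1" for x y
  proof -
    have "x / (1 + b - x) < y / (1 + b - y)"
      using that b apply (simp add: field_simps)
      using add_strict_mono[OF \<open>x < y\<close> mult_strict_left_mono[OF \<open>x < y\<close> b]] by simp
    moreover have "x * J x \<le> y * J y"
      using that Jnn[of x] Jmono[of x y] by (intro mult_mono) auto
    ultimately show ?thesis by (simp add: h_def)
  qed
  have h0: "h 0 = 0" by (simp add: h_def)
  have h1: "h 1 = 1 / b + J 1" by (simp add: h_def)
  have hcont: "continuous_on {0..1} h"
    unfolding h_def using b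
    by (intro continuous_intros Jc) auto
  have eqv: "1 / \<psi> = 1 / (1 + b - \<psi>) + J \<psi> \<longleftrightarrow> h \<psi> = 1" if "0 < \<psi>" "\<psi> < 1" for \<psi>
  proof -
    define Q where "Q = 1 / (1 + b - \<psi>) + J \<psi>"
    have "1 / \<psi> = Q \<longleftrightarrow> \<psi> * Q = 1"
      using that by (auto simp: divide_eq_eq mult.commute)
    moreover have "h \<psi> = \<psi> * Q" by (simp add: h_def Q_def distrib_left)
    ultimately have "1 / \<psi> = Q \<longleftrightarrow> h \<psi> = 1" by simp
    then show ?thesis by (simp add: Q_def)
  qed
  have main: "(\<forall>\<rho>. 0 \<le> \<rho> \<longrightarrow> \<rho> < 1 \<longrightarrow> (\<rho> < Phi \<longleftrightarrow> h \<rho> < 1)) \<and> (Phi = 1 \<longleftrightarrow> h 1 \<le> 1)"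
  proof (cases "1 / b + J 1 > 1")
    case True
    then have "h 1 > 1" using h1 by simp
    obtain p where p: "0 \<le> p" "p \<le> 1" "h p = 1"
      using IVT'[of h 0 1 1] hcont h0 \<open>h 1 > 1\<close> by auto
    have p0: "0 < p" using p h0 by (cases "p = 0") auto
    have p1: "p < 1" using p \<open>h 1 > 1\<close> by (cases "p = 1") auto
    have uniq: "q = p" if "0 < q" "q < 1" "h q = 1" for q
      using hmono[of q p] hmono[of p q] that p0 p1 p by (cases q p rule: linorder_cases) auto
    have P: "0 < p \<and> p < 1 \<and> 1 / p = 1 / (1 + b - p) + J p"
      using p0 p1 eqv[of p] p by blast
    have th: "(THE \<psi>. 0 < \<psi> \<and> \<psi> < 1 \<and> 1 / \<psi> = 1 / (1 + b - \<psi>) + J \<psi>) = p"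
    proof (rule the_equality)
      show "0 < p \<and> p < 1 \<and> 1 / p = 1 / (1 + b - p) + J p" using P .
      fix q assume "0 < q \<and> q < 1 \<and> 1 / q = 1 / (1 + b - q) + J q"
      then show "q = p" using uniq eqv by blast
    qed
    have "Phi = p"
      unfolding Phi_def if_P[OF True] th ..
    have A: "\<rho> < p \<longleftrightarrow> h \<rho> < 1" if "0 \<le> \<rho>" "\<rho> < 1" for \<rho>
    proof
      assume "\<rho> < p" then show "h \<rho> < 1" using hmono[of \<rho> p] that p by simp
    next
      assume hr: "h \<rho> < 1"
      show "\<rho> < p"
      proof (rule ccontr)
        assume "\<not> \<rho> < p"
        then have "p = \<rho> \<or> p < \<rho>" by auto
        then show False
        proof
          assume "p = \<rho>" then show False using hr p by simp
        next
          assume "p < \<rho>" then show False using hmono[of p \<rho>] hr p that by simp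
        qed
      qed
    qed
    have B: "\<not> (p = 1)" using p1 by simp
    show ?thesis using A B \<open>Phi = p\<close> \<open>h 1 > 1\<close> by auto
  next
    case False
    then have P1: "Phi = 1" and H1: "h 1 \<le> 1" unfolding Phi_def using h1 by auto
    have "h \<rho> < 1" if "0 \<le> \<rho>" "\<rho> < 1" for \<rho> using hmono[of \<rho> 1] that H1 by simp
    then show ?thesis using P1 H1 by auto
  qed
  show "\<And>\<rho>. 0 \<le> \<rho> \<Longrightarrow> \<rho> < 1 \<Longrightarrow> (\<rho> < Phi \<longleftrightarrow> \<rho> / (b + 1 - \<rho>) + \<rho> * J \<rho> < 1)"
    using main by (simp add: h_def add.commute add.left_commute)
  show "Phi = 1 \<longleftrightarrow> 1 / b + J 1 \<le> 1" using main h1 by simp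
qed



lemma unit_ball_vol_2: "unit_ball_vol 2 = pi"
  using unit_ball_vol_even[of 1] by simp

lemma emeasure_ball_complex:
  assumes "0 \<le> a"
  shows "emeasure lborel (ball (c::complex) a) = ennreal (pi * a\<^sup>2)"
    and "emeasure lborel (cball (c::complex) a) = ennreal (pi * a\<^sup>2)"
  using emeasure_ball[OF assms, of c] emeasure_cball[OF assms, of c] by (simp_all add: unit_ball_vol_2)

lemma has_integral_2pit:
  assumes "0 \<le> a"
  shows "((\<lambda>t. 2 * pi * t) has_integral pi * a\<^sup>2) {0..<a}"
proof -
  have "((\<lambda>t. 2 * pi * t) has_integral (pi * a\<^sup>2 - pi * 0\<^sup>2)) {0..a}"
    using assms
    by (intro fundamental_theorem_of_calculus)
       (auto intro!: derivative_eq_intros simp flip: has_real_derivative_iff_has_vector_derivative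
             simp: power2_eq_square)
  then show ?thesis
    by (subst has_integral_spike_set_eq[where T="{0..a}"])
      (auto intro: negligible_subset[of "{a}"])
qed

lemma distr_cmod:
  "distr (lborel::complex measure) borel cmod = density lborel (\<lambda>t. ennreal (2 * pi * t * indicator {0..} t))"
proof (rule measure_eqI_generator_eq_countable[where E="range lessThan" and \<Omega>=UNIV and A="range (\<lambda>n::nat. {..<real n})"])
  show "Int_stable (range lessThan :: real set set)"
  proof (clarsimp simp: Int_stable_def)
    fix a b :: real
    have "{..<a} \<inter> {..<b} = {..<min a b}" by auto
    then show "{..<a} \<inter> {..<b} \<in> range lessThan" by simp
  qed
  show "range lessThan \<subseteq> Pow (UNIV :: real set)" by auto
  show "sets (distr lborel borel cmod) = sigma_sets UNIV (range lessThan :: real set set)"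
    by (simp add: borel_Iio)
  show "sets (density lborel (\<lambda>t. ennreal (2 * pi * t * indicator {0..} t))) = sigma_sets UNIV (range lessThan :: real set set)"
    by (simp add: borel_Iio)
  show "range (\<lambda>n::nat. {..<real n}) \<subseteq> range lessThan" by auto
  show "\<Union> (range (\<lambda>n::nat. {..<real n})) = UNIV"
    by (auto intro: reals_Archimedean2)
  show "countable (range (\<lambda>n::nat. {..<real n}))" by auto
  have lhs: "emeasure (distr lborel borel cmod) {..<a} = ennreal (if 0 \<le> a then pi * a\<^sup>2 else 0)" for a :: real
  proof -
    have "emeasure (distr lborel borel cmod) {..<a} = emeasure lborel (cmod -` {..<a} \<inter> space lborel)"
      by (rule emeasure_distr) auto
    also have "cmod -` {..<a} \<inter> space lborel = ball 0 a" by auto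
    also have "emeasure lborel (ball (0::complex) a) = ennreal (if 0 \<le> a then pi * a\<^sup>2 else 0)"
      using emeasure_ball_complex(1)[of a 0] by (cases "0 \<le> a") (auto simp: ball_empty)
    finally show ?thesis .
  qed
  have rhs: "emeasure (density lborel (\<lambda>t. ennreal (2 * pi * t * indicator {0..} t))) {..<a} = ennreal (if 0 \<le> a then pi * a\<^sup>2 else 0)" for a :: real
  proof -
    have "emeasure (density lborel (\<lambda>t. ennreal (2 * pi * t * indicator {0..} t))) {..<a}
       = (\<integral>\<^sup>+ t. ennreal (2 * pi * t * indicator {0..} t) * indicator {..<a} t \<partial>lborel)"
      by (subst emeasure_density) auto
    also have "\<dots> = (\<integral>\<^sup>+ t. ennreal (2 * pi * t) * indicator {0..<a} t \<partial>lborel)"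
      by (intro nn_integral_cong) (auto simp: indicator_def)
    also have "\<dots> = ennreal (if 0 \<le> a then pi * a\<^sup>2 else 0)"
    proof (cases "0 \<le> a")
      case True
      then show ?thesis
        using nn_integral_has_integral_lebesgue'[OF _ has_integral_2pit[OF True]] by simp
    next
      case False
      then have "{0..<a} = {}" by auto
      then show ?thesis using False by simp
    qed
    finally show ?thesis .
  qed
  show "emeasure (distr lborel borel cmod) X = emeasure (density lborel (\<lambda>t. ennreal (2 * pi * t * indicator {0..} t))) X"
    if "X \<in> range lessThan" for X
    using that lhs rhs by auto
  show "emeasure (distr lborel borel cmod) X \<noteq> \<infinity>" if "X \<in> range (\<lambda>n::nat. {..<real n})" for X
    using that lhs by auto
qed

lemma radial_integral:
  fixes g :: "real \<Rightarrow> real"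
  assumes [measurable]: "g \<in> borel_measurable borel"
  shows "(\<integral>y. g (cmod y) \<partial>(lborel::complex measure)) = (\<integral>t. (2 * pi * t * indicator {0..} t) * g t \<partial>lborel)"
proof -
  have "(\<integral>y. g (cmod y) \<partial>(lborel::complex measure)) = integral\<^sup>L (distr lborel borel cmod) g"
    by (subst integral_distr) auto
  also have "\<dots> = integral\<^sup>L (density lborel (\<lambda>t. ennreal (2 * pi * t * indicator {0..} t))) g"
    by (simp add: distr_cmod)
  also have "\<dots> = (\<integral>t. (2 * pi * t * indicator {0..} t) *\<^sub>R g t \<partial>lborel)"
    by (subst integral_density) (auto simp: indicator_def)
  finally show ?thesis by simp
qed

lemma polar_lemma:
  fixes lam T r \<beta> x \<psi> :: real
  assumes "0 < T" "0 < r" "2 < \<beta>" "0 < x" "\<psi> \<le> 1"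
  shows "(LINT y:-cball 0 x|lborel. lam / (1 + bval T r \<beta> y - \<psi>)) = 2 * pi * lam * r\<^sup>2 * Jr T \<beta> (x / r) \<psi>"
proof -
  define G where "G = (\<lambda>t::real. indicator {x<..} t * (lam / (1 + t powr \<beta> / (T * r powr \<beta>) - \<psi>)))"
  have Gm[measurable]: "G \<in> borel_measurable borel" unfolding G_def by measurable
  have "(LINT y:-cball 0 x|lborel. lam / (1 + bval T r \<beta> y - \<psi>)) = (\<integral>y. G (cmod y) \<partial>(lborel::complex measure))"
    unfolding set_lebesgue_integral_def G_def bval_def
    by (intro Bochner_Integration.integral_cong) (auto simp: indicator_def)
  also have "\<dots> = (\<integral>t. (2 * pi * t * indicator {0..} t) * G t \<partial>lborel)"
    by (rule radial_integral[OF Gm])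
  also have "\<dots> = \<bar>r\<bar> *\<^sub>R (\<integral>s. (2 * pi * (0 + r * s) * indicator {0..} (0 + r * s)) * G (0 + r * s) \<partial>lborel)"
    using assms by (intro lborel_integral_real_affine) auto
  also have "(\<lambda>s. (2 * pi * (0 + r * s) * indicator {0..} (0 + r * s)) * G (0 + r * s))
      = (\<lambda>s. (2 * pi * lam * r) * (indicator {x/r<..} s *\<^sub>R (s / (s powr \<beta> / T + 1 - \<psi>))))"
  proof
    fix s :: real
    show "(2 * pi * (0 + r * s) * indicator {0..} (0 + r * s)) * G (0 + r * s)
      = (2 * pi * lam * r) * (indicator {x/r<..} s *\<^sub>R (s / (s powr \<beta> / T + 1 - \<psi>)))"
    proof (cases "x / r < s")
      case True
      then have rs: "x < r * s" using assms by (simp add: field_simps)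
      then have s: "0 < s" using assms True by (smt (verit) divide_pos_pos)
      have e1: "(r * s) powr \<beta> / (T * r powr \<beta>) = s powr \<beta> / T"
        using assms s by (simp add: powr_mult)
      have e2: "1 + s powr \<beta> / T - \<psi> = s powr \<beta> / T + 1 - \<psi>" by simp
      show ?thesis using rs s assms True
        by (simp add: G_def indicator_def e1 e2 del: times_divide_eq_right times_divide_eq_left)
          (simp add: times_divide_eq_right)
    next
      case False
      then have "\<not> x < r * s" using assms by (simp add: field_simps)
      then show ?thesis using False by (simp add: G_def indicator_def)
    qed
  qed
  also have "\<bar>r\<bar> *\<^sub>R (\<integral>s. (2 * pi * lam * r) * (indicator {x/r<..} s *\<^sub>R (s / (s powr \<beta> / T + 1 - \<psi>))) \<partial>lborel)
      = 2 * pi * lam * r\<^sup>2 * Jr T \<beta> (x / r) \<psi>"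
    using assms unfolding Jr_def set_lebesgue_integral_def
    by (subst integral_mult_right_zero) (simp add: power2_eq_square)
  finally show ?thesis .
qed



lemma I_fun_eq:
  "I_fun lam T r \<beta> \<rho> x = \<rho> * (2 * pi * lam * r\<^sup>2 * Jr T \<beta> (x / r) \<rho>)"
proof -
  have "(LINT s:{x / r<..}|lborel. \<rho> * s / (s powr \<beta> / T + 1 - \<rho>))
      = (LINT s:{x / r<..}|lborel. \<rho> * (s / (s powr \<beta> / T + 1 - \<rho>)))" by simp
  also have "\<dots> = \<rho> * Jr T \<beta> (x / r) \<rho>" unfolding Jr_def by (rule set_integral_mult_right)
  finally show ?thesis unfolding I_fun_def by simp
qed

lemma tail_tendsto:
  fixes A C r \<beta> :: real
  assumes "0 < r" "2 < \<beta>"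
  shows "((\<lambda>x. A * x powr (-\<beta>) + C * (x / r) powr (2 - \<beta>)) \<longlongrightarrow> 0) at_top"
  using assms by real_asymp

lemma F_props:
  fixes lam T r \<beta> \<rho> :: real
  assumes lam: "0 < lam" and T: "0 < T" and r: "0 < r" and \<beta>: "2 < \<beta>" and \<rho>: "0 \<le> \<rho>" "\<rho> \<le> 1"
  defines "F \<equiv> \<lambda>x. \<rho> / (x powr \<beta> / (T * r powr \<beta>) + 1 - \<rho>) + I_fun lam T r \<beta> \<rho> x"
  shows "\<And>x1 x2. 0 < x1 \<Longrightarrow> x1 \<le> x2 \<Longrightarrow> F x2 \<le> F x1"
    and "\<And>x1 x2. 0 < \<rho> \<Longrightarrow> 0 < x1 \<Longrightarrow> x1 < x2 \<Longrightarrow> F x2 < F x1"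
    and "\<exists>x>0. F x < 1"
proof -
  define b where "b = (\<lambda>x::real. x powr \<beta> / (T * r powr \<beta>))"
  have bpos: "0 < b x" if "0 < x" for x using that T r by (simp add: b_def)
  have bmono: "b x1 < b x2" if "0 < x1" "x1 < x2" for x1 x2
    using that T r \<beta> by (simp add: b_def divide_strict_right_mono powr_less_mono2)
  have bmono': "b x1 \<le> b x2" if "0 < x1" "x1 \<le> x2" for x1 x2
    using bmono[of x1 x2] that by (cases "x1 = x2") auto
  have Ie: "I_fun lam T r \<beta> \<rho> x = \<rho> * (2 * pi * lam * r\<^sup>2 * Jr T \<beta> (x / r) \<rho>)" for x
    by (rule I_fun_eq)
  have Imono: "I_fun lam T r \<beta> \<rho> x2 \<le> I_fun lam T r \<beta> \<rho> x1" if "0 < x1" "x1 \<le> x2" for x1 x2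
    unfolding Ie using that Jr_antimono[of T \<beta> "x1 / r" "x2 / r" \<rho>] T r \<beta> \<rho> lam
    by (intro mult_left_mono) (auto simp: divide_right_mono)
  have F_eq: "F x = \<rho> / (b x + 1 - \<rho>) + I_fun lam T r \<beta> \<rho> x" for x by (simp add: F_def b_def)
  show mono: "F x2 \<le> F x1" if "0 < x1" "x1 \<le> x2" for x1 x2
  proof -
    have "\<rho> / (b x2 + 1 - \<rho>) \<le> \<rho> / (b x1 + 1 - \<rho>)"
      using bmono'[OF that] bpos[of x1] that \<rho> by (intro divide_left_mono mult_pos_pos) auto
    then show ?thesis unfolding F_eq using Imono[OF that] by simp
  qed
  show "F x2 < F x1" if "0 < \<rho>" "0 < x1" "x1 < x2" for x1 x2
  proof -
    have "\<rho> / (b x2 + 1 - \<rho>) < \<rho> / (b x1 + 1 - \<rho>)"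
      using bmono[of x1 x2] bpos[of x1] that \<rho> by (intro divide_strict_left_mono mult_pos_pos) auto
    then show ?thesis unfolding F_eq using Imono[of x1 x2] that by simp
  qed
  define C where "C = 2 * pi * lam * r\<^sup>2 * (T / (\<beta> - 2))"
  have bound: "F x \<le> (T * r powr \<beta>) * x powr (-\<beta>) + C * (x / r) powr (2 - \<beta>)" if "0 < x" for x
  proof -
    have "\<rho> / (b x + 1 - \<rho>) \<le> 1 / b x"
    proof -
      have bp: "0 < b x" using bpos[OF that] .
      have "\<rho> * b x \<le> b x" using bp \<rho> by (intro mult_left_le_one_le) auto
      then have "\<rho> * b x \<le> b x + 1 - \<rho>" using \<rho> by linarith
      moreover have "0 < b x + 1 - \<rho>" using bp \<rho> by linarith
      ultimately show ?thesis using bp by (simp add: divide_simps)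
    qed
    also have "1 / b x = (T * r powr \<beta>) * x powr (-\<beta>)"
      using that by (simp add: b_def powr_minus field_simps)
    finally have t1: "\<rho> / (b x + 1 - \<rho>) \<le> (T * r powr \<beta>) * x powr (-\<beta>)" .
    have J0: "0 \<le> Jr T \<beta> (x / r) \<rho>" using Jr_nonneg[of T \<beta> "x/r" \<rho>] T \<beta> r that \<rho> by simp
    have "I_fun lam T r \<beta> \<rho> x \<le> 2 * pi * lam * r\<^sup>2 * Jr T \<beta> (x / r) \<rho>"
      unfolding Ie using J0 lam \<rho> by (intro mult_left_le_one_le) auto
    also have "\<dots> \<le> 2 * pi * lam * r\<^sup>2 * (T * ((x / r) powr (2 - \<beta>) / (\<beta> - 2)))"
      using Jr_bound[of T \<beta> "x / r" \<rho>] T \<beta> r that \<rho> lam by (intro mult_left_mono) auto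
    also have "\<dots> = C * (x / r) powr (2 - \<beta>)" by (simp add: C_def)
    finally show ?thesis using t1 by (simp add: F_eq)
  qed
  have "eventually (\<lambda>x. (T * r powr \<beta>) * x powr (-\<beta>) + C * (x / r) powr (2 - \<beta>) < 1) at_top"
    using tail_tendsto[OF r \<beta>, of "T * r powr \<beta>" C] by (rule order_tendstoD) simp
  moreover have "eventually (\<lambda>x::real. 0 < x) at_top" by (rule eventually_gt_at_top)
  ultimately have "eventually (\<lambda>x. (T * r powr \<beta>) * x powr (-\<beta>) + C * (x / r) powr (2 - \<beta>) < 1 \<and> 0 < x) at_top"
    by (rule eventually_conj)
  then obtain x where "0 < x" "(T * r powr \<beta>) * x powr (-\<beta>) + C * (x / r) powr (2 - \<beta>) < 1"
    using eventually_happens trivial_limit_at_top_linorder by blast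
  then show "\<exists>x>0. F x < 1" using bound[of x] by auto
qed



lemma cis_borel[measurable]: "cis \<in> borel_measurable borel"
  by (intro borel_measurable_continuous_onI continuous_intros)

lemma receiver_meas[measurable]:
  "(\<lambda>p. cmod (receiver r p)) \<in> borel_measurable (lborel \<Otimes>\<^sub>M lborel)"
  unfolding receiver_def by measurable

lemma sets_bip: "sets (bipole_intensity lam) = sets (lborel \<Otimes>\<^sub>M (lborel :: real measure) :: (complex \<times> real) measure)"
  unfolding bipole_intensity_def by simp

lemma recv_sets:
  "{p. cmod (receiver r p) \<le> a} \<in> sets (bipole_intensity lam)"
  "{p. cmod (receiver r p) < a} \<in> sets (bipole_intensity lam)"
proof -
  have "(\<lambda>p. cmod (receiver r p)) -` {..a} \<inter> space (lborel \<Otimes>\<^sub>M lborel) \<in> sets (lborel \<Otimes>\<^sub>M (lborel :: real measure) :: (complex \<times> real) measure)"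
    by (rule measurable_sets[OF receiver_meas]) auto
  then show "{p. cmod (receiver r p) \<le> a} \<in> sets (bipole_intensity lam)"
    unfolding sets_bip by (simp add: vimage_def space_pair_measure)
  have "(\<lambda>p. cmod (receiver r p)) -` {..<a} \<inter> space (lborel \<Otimes>\<^sub>M lborel) \<in> sets (lborel \<Otimes>\<^sub>M (lborel :: real measure) :: (complex \<times> real) measure)"
    by (rule measurable_sets[OF receiver_meas]) auto
  then show "{p. cmod (receiver r p) < a} \<in> sets (bipole_intensity lam)"
    unfolding sets_bip by (simp add: vimage_def space_pair_measure)
qed

lemma pair_lb: "pair_sigma_finite (lborel :: complex measure) (lborel :: real measure)"
  by (simp add: pair_sigma_finite_def lborel.sigma_finite_measure_axioms)

lemma recv_emeasure_gen:
  fixes lam r a :: real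
  assumes lam: "0 \<le> lam" and a: "0 \<le> a"
    and A: "A \<in> sets (lborel \<Otimes>\<^sub>M (lborel :: real measure) :: (complex \<times> real) measure)"
    and sec: "\<And>\<theta>. emeasure lborel {x. (x, \<theta>) \<in> A} = ennreal (pi * a\<^sup>2)"
  shows "emeasure (bipole_intensity lam) A = ennreal (lam * pi * a\<^sup>2)"
proof -
  let ?f = "\<lambda>(x::complex, \<theta>::real). ennreal (lam / (2 * pi)) * indicator {0..<2 * pi} \<theta>"
  have "emeasure (bipole_intensity lam) A = (\<integral>\<^sup>+ p. ?f p * indicator A p \<partial>(lborel \<Otimes>\<^sub>M lborel))"
    unfolding bipole_intensity_def using A by (subst emeasure_density) auto
  also have "\<dots> = (\<integral>\<^sup>+ \<theta>. \<integral>\<^sup>+ x. ?f (x, \<theta>) * indicator A (x, \<theta>) \<partial>lborel \<partial>lborel)"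
    using A by (subst pair_sigma_finite.nn_integral_snd[OF pair_lb, symmetric]) auto
  also have "\<dots> = (\<integral>\<^sup>+ \<theta>. ennreal (lam / (2 * pi) * (pi * a\<^sup>2)) * indicator {0..<2 * pi} \<theta> \<partial>lborel)"
  proof (intro nn_integral_cong)
    fix \<theta> :: real
    have m: "{x. (x, \<theta>) \<in> A} \<in> sets lborel"
      using sets_Pair2[OF A, of \<theta>] by (simp add: vimage_def)
    have "(\<integral>\<^sup>+ x. ?f (x, \<theta>) * indicator A (x, \<theta>) \<partial>lborel)
        = (\<integral>\<^sup>+ x. (ennreal (lam / (2 * pi)) * indicator {0..<2 * pi} \<theta>) * indicator {x. (x, \<theta>) \<in> A} x \<partial>lborel)"
      by (intro nn_integral_cong) (auto simp: indicator_def)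
    also have "\<dots> = (ennreal (lam / (2 * pi)) * indicator {0..<2 * pi} \<theta>) * emeasure lborel {x. (x, \<theta>) \<in> A}"
      using m by (rule nn_integral_cmult_indicator)
    also have "\<dots> = ennreal (lam / (2 * pi) * (pi * a\<^sup>2)) * indicator {0..<2 * pi} \<theta>"
    proof (cases "\<theta> \<in> {0..<2 * pi}")
      case True
      have "ennreal (lam / (2 * pi)) * ennreal (pi * a\<^sup>2) = ennreal (lam / (2 * pi) * (pi * a\<^sup>2))"
        using lam by (intro ennreal_mult[symmetric]) auto
      then show ?thesis using True by (simp add: sec)
    qed (simp add: sec)
    finally show "(\<integral>\<^sup>+ x. ?f (x, \<theta>) * indicator A (x, \<theta>) \<partial>lborel)
        = ennreal (lam / (2 * pi) * (pi * a\<^sup>2)) * indicator {0..<2 * pi} \<theta>" .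
  qed
  also have "\<dots> = ennreal (lam / (2 * pi) * (pi * a\<^sup>2)) * emeasure lborel {0..<2 * pi}"
    by (rule nn_integral_cmult_indicator) auto
  also have "\<dots> = ennreal (lam * pi * a\<^sup>2)"
    using lam by (simp add: ennreal_mult'[symmetric])
  finally show ?thesis .
qed

lemma recv_emeasure:
  fixes lam r a :: real
  assumes lam: "0 \<le> lam" and a: "0 \<le> a"
  shows "emeasure (bipole_intensity lam) {p. cmod (receiver r p) \<le> a} = ennreal (lam * pi * a\<^sup>2)"
    and "emeasure (bipole_intensity lam) {p. cmod (receiver r p) < a} = ennreal (lam * pi * a\<^sup>2)"
proof -
  have e1: "{x. cmod (receiver r (x, \<theta>)) \<le> a} = cball (- (complex_of_real r * cis \<theta>)) a" for \<theta>
    by (auto simp: receiver_def dist_norm norm_minus_commute add.commute)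
  have e2: "{x. cmod (receiver r (x, \<theta>)) < a} = ball (- (complex_of_real r * cis \<theta>)) a" for \<theta>
    by (auto simp: receiver_def dist_norm norm_minus_commute add.commute)
  show "emeasure (bipole_intensity lam) {p. cmod (receiver r p) \<le> a} = ennreal (lam * pi * a\<^sup>2)"
    using recv_sets(1)[of r a lam] unfolding sets_bip
    by (intro recv_emeasure_gen lam a) (auto simp: e1 emeasure_ball_complex a)
  show "emeasure (bipole_intensity lam) {p. cmod (receiver r p) < a} = ennreal (lam * pi * a\<^sup>2)"
    using recv_sets(2)[of r a lam] unfolding sets_bip
    by (intro recv_emeasure_gen lam a) (auto simp: e2 emeasure_ball_complex a)
qed



definition Ev :: "'w measure \<Rightarrow> ('w \<Rightarrow> 'a set) \<Rightarrow> 'a set \<Rightarrow> nat \<Rightarrow> 'w set" where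
  "Ev M N A k = {\<omega>\<in>space M. finite (N \<omega> \<inter> A) \<and> card (N \<omega> \<inter> A) = k}"

lemma pp_prob: "poisson_pp M mu N \<Longrightarrow> prob_space M"
  by (simp add: poisson_pp_def)

lemma pp_Ev:
  assumes "poisson_pp M mu N" "A \<in> sets mu" "emeasure mu A < \<infinity>"
  shows "Ev M N A k \<in> sets M"
    "measure M (Ev M N A k) = measure mu A ^ k / fact k * exp (- measure mu A)"
  using assms unfolding poisson_pp_def Ev_def by auto

lemma pp_empty:
  assumes "poisson_pp M mu N" "A \<in> sets mu" "emeasure mu A < \<infinity>"
  shows "{\<omega>\<in>space M. N \<omega> \<inter> A = {}} \<in> sets M"
    "measure M {\<omega>\<in>space M. N \<omega> \<inter> A = {}} = exp (- measure mu A)"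
proof -
  have e: "{\<omega>\<in>space M. N \<omega> \<inter> A = {}} = Ev M N A 0"
    unfolding Ev_def by auto
  show "{\<omega>\<in>space M. N \<omega> \<inter> A = {}} \<in> sets M"
    "measure M {\<omega>\<in>space M. N \<omega> \<inter> A = {}} = exp (- measure mu A)"
    unfolding e using pp_Ev[OF assms, of 0] by auto
qed

lemma pp_finite:
  assumes "poisson_pp M mu N" "A \<in> sets mu" "emeasure mu A < \<infinity>"
  shows "{\<omega>\<in>space M. finite (N \<omega> \<inter> A)} \<in> sets M"
    "measure M {\<omega>\<in>space M. finite (N \<omega> \<inter> A)} = 1"
    "{\<omega>\<in>space M. infinite (N \<omega> \<inter> A)} \<in> sets M"
    "measure M {\<omega>\<in>space M. infinite (N \<omega> \<inter> A)} = 0"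
proof -
  interpret prob_space M using pp_prob[OF assms(1)] .
  define m where "m = measure mu A"
  have U: "{\<omega>\<in>space M. finite (N \<omega> \<inter> A)} = (\<Union>k. Ev M N A k)"
    unfolding Ev_def by auto
  show S: "{\<omega>\<in>space M. finite (N \<omega> \<inter> A)} \<in> sets M"
    unfolding U using pp_Ev(1)[OF assms] by auto
  have "(\<lambda>k. measure M (Ev M N A k)) sums measure M (\<Union>k. Ev M N A k)"
    using pp_Ev(1)[OF assms] by (intro finite_measure_UNION) (auto simp: disjoint_family_on_def Ev_def)
  moreover have "(\<lambda>k. measure M (Ev M N A k)) = (\<lambda>k. m ^ k /\<^sub>R fact k * exp (- m))"
  proof
    fix k show "measure M (Ev M N A k) = m ^ k /\<^sub>R fact k * exp (- m)"
      using pp_Ev(2)[OF assms, of k] by (simp add: m_def divide_inverse_commute)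
  qed
  moreover have "(\<lambda>k. m ^ k /\<^sub>R fact k * exp (- m)) sums (exp m * exp (- m))"
    by (intro sums_mult2 exp_converges)
  ultimately have "measure M (\<Union>k. Ev M N A k) = exp m * exp (- m)"
    using sums_unique2 by metis
  then show F: "measure M {\<omega>\<in>space M. finite (N \<omega> \<inter> A)} = 1"
    unfolding U by (simp add: exp_minus)
  have C: "{\<omega>\<in>space M. infinite (N \<omega> \<inter> A)} = space M - {\<omega>\<in>space M. finite (N \<omega> \<inter> A)}" by auto
  show "{\<omega>\<in>space M. infinite (N \<omega> \<inter> A)} \<in> sets M" unfolding C using S by auto
  show "measure M {\<omega>\<in>space M. infinite (N \<omega> \<inter> A)} = 0"
    unfolding C using finite_measure_compl[OF S] F prob_space by simp
qed

lemma pp_le1: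
  assumes "poisson_pp M mu N" "A \<in> sets mu" "emeasure mu A < \<infinity>"
  shows "{\<omega>\<in>space M. \<not> (finite (N \<omega> \<inter> A) \<and> card (N \<omega> \<inter> A) \<le> 1)} \<in> sets M"
    "measure M {\<omega>\<in>space M. \<not> (finite (N \<omega> \<inter> A) \<and> card (N \<omega> \<inter> A) \<le> 1)} \<le> (measure mu A)\<^sup>2"
proof -
  interpret prob_space M using pp_prob[OF assms(1)] .
  define m where "m = measure mu A"
  have m0: "0 \<le> m" by (simp add: m_def)
  have U: "{\<omega>\<in>space M. finite (N \<omega> \<inter> A) \<and> card (N \<omega> \<inter> A) \<le> 1} = Ev M N A 0 \<union> Ev M N A 1"
    unfolding Ev_def by (auto simp: le_Suc_eq)
  have S: "{\<omega>\<in>space M. finite (N \<omega> \<inter> A) \<and> card (N \<omega> \<inter> A) \<le> 1} \<in> sets M"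
    unfolding U using pp_Ev(1)[OF assms] by auto
  have "measure M {\<omega>\<in>space M. finite (N \<omega> \<inter> A) \<and> card (N \<omega> \<inter> A) \<le> 1} = exp (- m) + m * exp (- m)"
    unfolding U using pp_Ev[OF assms, of 0] pp_Ev[OF assms, of 1]
    by (subst finite_measure_Union) (auto simp: Ev_def m_def)
  have C: "{\<omega>\<in>space M. \<not> (finite (N \<omega> \<inter> A) \<and> card (N \<omega> \<inter> A) \<le> 1)}
     = space M - {\<omega>\<in>space M. finite (N \<omega> \<inter> A) \<and> card (N \<omega> \<inter> A) \<le> 1}" by auto
  show "{\<omega>\<in>space M. \<not> (finite (N \<omega> \<inter> A) \<and> card (N \<omega> \<inter> A) \<le> 1)} \<in> sets M"
    unfolding C using S by auto
  have "measure M {\<omega>\<in>space M. \<not> (finite (N \<omega> \<inter> A) \<and> card (N \<omega> \<inter> A) \<le> 1)} = 1 - (exp (- m) + m * exp (- m))"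
    unfolding C using finite_measure_compl[OF S] prob_space
      \<open>measure M _ = exp (- m) + m * exp (- m)\<close> by simp
  also have "\<dots> \<le> m\<^sup>2"
  proof -
    have "1 - m \<le> exp (- m)" using exp_ge_add_one_self[of "- m"] by simp
    then have "(1 - m) * (1 + m) \<le> exp (- m) * (1 + m)" using m0 by (intro mult_right_mono) auto
    then show ?thesis by (simp add: algebra_simps power2_eq_square)
  qed
  finally show "measure M {\<omega>\<in>space M. \<not> (finite (N \<omega> \<inter> A) \<and> card (N \<omega> \<inter> A) \<le> 1)} \<le> (measure mu A)\<^sup>2"
    by (simp add: m_def)
qed



lemma squeeze:
  assumes P: "prob_space M"
    and sets: "B1 \<in> sets M" "B2 \<in> sets M" "Z \<in> sets M"
    and Z0: "measure M Z = 0"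
    and S: "S \<subseteq> space M" "B1 - Z \<subseteq> S" "S - Z \<subseteq> B2" "B1 \<subseteq> B2"
    and c: "measure M B1 = c" "measure M B2 = c"
  shows "measure (completion M) S = c"
proof -
  interpret prob_space M using P .
  have Zn: "Z \<in> null_sets M" using Z0 sets by (simp add: null_sets_def emeasure_eq_measure)
  have "measure M (B2 - B1) = 0" using finite_measure_Diff[OF sets(2,1) S(4)] c by simp
  then have Dn: "B2 - B1 \<in> null_sets M" using sets by (simp add: null_sets_def emeasure_eq_measure)
  have Rn: "S - (B1 - Z) \<in> null_sets (completion M)"
  proof (rule null_sets_completion_subset[where A="(B2 - B1) \<union> Z"])
    show "S - (B1 - Z) \<subseteq> B2 - B1 \<union> Z" using S by auto
    show "B2 - B1 \<union> Z \<in> null_sets (completion M)"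
      using Dn Zn by (intro null_sets_completionI null_sets.Un)
  qed
  have Ssplit: "S = (B1 - Z) \<union> (S - (B1 - Z))" using S by auto
  have "measure (completion M) S = measure (completion M) (B1 - Z)"
    by (subst Ssplit, rule measure_Un_null_set) (use sets Rn in auto)
  also have "\<dots> = measure M (B1 - Z)" using sets by (intro measure_completion) auto
  also have "\<dots> = c" using measure_Diff_null_set[OF sets(1) Zn] c by simp
  finally show ?thesis .
qed

lemma opt_MAP_single:
  fixes lam T r \<beta> x :: real
  assumes T: "0 < T" and r: "0 < r" and \<beta>: "2 < \<beta>" and x: "0 < x"
    and Y: "Ys \<inter> cball 0 x = {y0}" "cmod y0 = x"
  defines "b \<equiv> x powr \<beta> / (T * r powr \<beta>)"
  defines "J \<equiv> (\<lambda>\<psi>. 2 * pi * lam * r\<^sup>2 * Jr T \<beta> (x / r) \<psi>)"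
  shows "opt_MAP lam T r \<beta> Ys (cball 0 x) =
    (if 1 / b + J 1 > 1 then (THE \<psi>. 0 < \<psi> \<and> \<psi> < 1 \<and> 1 / \<psi> = 1 / (1 + b - \<psi>) + J \<psi>) else 1)"
proof -
  have bv: "bval T r \<beta> y0 = b" unfolding bval_def b_def using Y by simp
  have L: "(LINT y:-cball 0 x|lborel. lam / (1 + bval T r \<beta> y - \<psi>)) = J \<psi>" if "\<psi> \<le> 1" for \<psi>
    unfolding J_def using polar_lemma[OF T r \<beta> x that] .
  have L1: "(LINT y:-cball 0 x|lborel. lam / bval T r \<beta> y) = J 1"
    using L[of 1] by simp
  have cond: "(\<Sum>y\<in>Ys \<inter> cball 0 x. 1 / bval T r \<beta> y) + (LINT y:-cball 0 x|lborel. lam / bval T r \<beta> y) = 1 / b + J 1"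
    using Y bv L1 by simp
  have eq: "(0 < \<psi> \<and> \<psi> < 1 \<and> 1 / \<psi> = (\<Sum>y\<in>Ys \<inter> cball 0 x. 1 / (1 + bval T r \<beta> y - \<psi>))
                       + (LINT y:-cball 0 x|lborel. lam / (1 + bval T r \<beta> y - \<psi>)))
     \<longleftrightarrow> (0 < \<psi> \<and> \<psi> < 1 \<and> 1 / \<psi> = 1 / (1 + b - \<psi>) + J \<psi>)" for \<psi>
    using Y bv L[of \<psi>] by auto
  show ?thesis unfolding opt_MAP_def cond eq ..
qed

lemma psi_char:
  fixes lam T r \<beta> x :: real
  assumes lam: "0 < lam" and T: "0 < T" and r: "0 < r" and \<beta>: "2 < \<beta>" and x: "0 < x"
    and Y: "Ys \<inter> cball 0 x = {y0}" "cmod y0 = x"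
  shows "\<And>\<rho>. 0 \<le> \<rho> \<Longrightarrow> \<rho> < 1 \<Longrightarrow> (\<rho> < opt_MAP lam T r \<beta> Ys (cball 0 x) \<longleftrightarrow>
             \<rho> / (x powr \<beta> / (T * r powr \<beta>) + 1 - \<rho>) + I_fun lam T r \<beta> \<rho> x < 1)"
    and "opt_MAP lam T r \<beta> Ys (cball 0 x) = 1 \<longleftrightarrow>
             1 / (x powr \<beta> / (T * r powr \<beta>) + 1 - 1) + I_fun lam T r \<beta> 1 x \<le> 1"
proof -
  define b where "b = x powr \<beta> / (T * r powr \<beta>)"
  define J where "J = (\<lambda>\<psi>. 2 * pi * lam * r\<^sup>2 * Jr T \<beta> (x / r) \<psi>)"
  have b: "0 < b" using T r x by (simp add: b_def)
  have xr: "0 < x / r" using x r by simp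
  have Jc: "continuous_on {0..1} J"
  proof -
    have "continuous_on {0..1} (Jr T \<beta> (x / r))"
      by (rule continuous_on_subset[OF Jr_cont[OF T \<beta> xr]]) auto
    then show ?thesis unfolding J_def by (intro continuous_on_mult_left)
  qed
  have Jnn: "0 \<le> J y" if "0 \<le> y" "y \<le> 1" for y
    unfolding J_def using Jr_nonneg[OF T \<beta> xr, of y] that lam by simp
  have Jmono: "J y \<le> J z" if "0 \<le> y" "y \<le> z" "z \<le> 1" for y z
    unfolding J_def using Jr_mono_psi[OF T \<beta> xr, of y z] that lam by (intro mult_left_mono) auto
  note O = opt_MAP_single[OF T r \<beta> x Y, of lam, folded b_def J_def]
  have C1: "\<rho> < (if 1 / b + J 1 > 1 then (THE \<psi>. 0 < \<psi> \<and> \<psi> < 1 \<and> 1 / \<psi> = 1 / (1 + b - \<psi>) + J \<psi>) else 1)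
      \<longleftrightarrow> \<rho> / (b + 1 - \<rho>) + \<rho> * J \<rho> < 1" if "0 \<le> \<rho>" "\<rho> < 1" for \<rho>
  proof (rule phi_char(1)[of b J \<rho>])
    show "0 < b" by (rule b)
    show "continuous_on {0..1} J" by (rule Jc)
    show "0 \<le> J x" if "0 \<le> x" "x \<le> 1" for x using Jnn that .
    show "J x \<le> J y" if "0 \<le> x" "x \<le> y" "y \<le> 1" for x y using Jmono that .
  qed (use that in auto)
  have C2: "(if 1 / b + J 1 > 1 then (THE \<psi>. 0 < \<psi> \<and> \<psi> < 1 \<and> 1 / \<psi> = 1 / (1 + b - \<psi>) + J \<psi>) else 1) = 1
      \<longleftrightarrow> 1 / b + J 1 \<le> 1"
  proof (rule phi_char(2)[of b J])
    show "0 < b" by (rule b)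
    show "continuous_on {0..1} J" by (rule Jc)
    show "0 \<le> J x" if "0 \<le> x" "x \<le> 1" for x using Jnn that .
    show "J x \<le> J y" if "0 \<le> x" "x \<le> y" "y \<le> 1" for x y using Jmono that .
  qed
  have Ie: "I_fun lam T r \<beta> \<rho> x = \<rho> * J \<rho>" for \<rho> unfolding J_def by (rule I_fun_eq)
  show "\<And>\<rho>. 0 \<le> \<rho> \<Longrightarrow> \<rho> < 1 \<Longrightarrow> (\<rho> < opt_MAP lam T r \<beta> Ys (cball 0 x) \<longleftrightarrow>
             \<rho> / (x powr \<beta> / (T * r powr \<beta>) + 1 - \<rho>) + I_fun lam T r \<beta> \<rho> x < 1)"
  proof -
    fix \<rho> :: real assume r0: "0 \<le> \<rho>" and r1: "\<rho> < 1"
    show "\<rho> < opt_MAP lam T r \<beta> Ys (cball 0 x) \<longleftrightarrow>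
             \<rho> / (x powr \<beta> / (T * r powr \<beta>) + 1 - \<rho>) + I_fun lam T r \<beta> \<rho> x < 1"
      using C1[OF r0 r1] unfolding O Ie b_def[symmetric] J_def .
  qed
  show "opt_MAP lam T r \<beta> Ys (cball 0 x) = 1 \<longleftrightarrow>
             1 / (x powr \<beta> / (T * r powr \<beta>) + 1 - 1) + I_fun lam T r \<beta> 1 x \<le> 1"
  proof -
    have e: "1 / (b + 1 - 1) + 1 * (2 * pi * lam * r\<^sup>2 * Jr T \<beta> (x / r) 1) = 1 / b + 2 * pi * lam * r\<^sup>2 * Jr T \<beta> (x / r) 1" by simp
    show ?thesis using C2 unfolding O Ie b_def[symmetric] J_def e .
  qed
qed



context
  fixes M :: "'w measure" and N :: "'w \<Rightarrow> (complex \<times> real) set"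
    and lam T r \<beta> :: real
  assumes lam: "0 < lam" and T: "0 < T" and r: "0 < r" and \<beta>: "2 < \<beta>"
    and PP: "poisson_pp M (bipole_intensity lam) N"
begin

abbreviation "D \<equiv> (\<lambda>p. cmod (receiver r p))"
abbreviation "Ale a \<equiv> {p. D p \<le> a}"
abbreviation "Alt a \<equiv> {p. D p < a}"

lemma PS: "prob_space M" using PP by (rule pp_prob)

lemma Ale_props:
  assumes "0 \<le> a"
  shows "Ale a \<in> sets (bipole_intensity lam)" "emeasure (bipole_intensity lam) (Ale a) < \<infinity>"
    "measure (bipole_intensity lam) (Ale a) = lam * pi * a\<^sup>2"
    "Alt a \<in> sets (bipole_intensity lam)" "emeasure (bipole_intensity lam) (Alt a) < \<infinity>"
    "measure (bipole_intensity lam) (Alt a) = lam * pi * a\<^sup>2"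
  using recv_sets[of r a lam] recv_emeasure[of lam a r] lam assms
  by (auto simp: measure_def)

lemma Ann_props:
  assumes "0 \<le> a" "a \<le> b"
  shows "Alt b - Alt a \<in> sets (bipole_intensity lam)"
    "emeasure (bipole_intensity lam) (Alt b - Alt a) < \<infinity>"
    "measure (bipole_intensity lam) (Alt b - Alt a) = lam * pi * (b\<^sup>2 - a\<^sup>2)"
proof -
  have b: "0 \<le> b" using assms by simp
  show "Alt b - Alt a \<in> sets (bipole_intensity lam)" using Ale_props(4)[OF b] Ale_props(4)[OF assms(1)] by auto
  have "emeasure (bipole_intensity lam) (Alt b - Alt a) \<le> emeasure (bipole_intensity lam) (Alt b)"
    using Ale_props(4)[OF b] by (intro emeasure_mono) auto
  then show "emeasure (bipole_intensity lam) (Alt b - Alt a) < \<infinity>" using Ale_props(5)[OF b] by simp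
  have "measure (bipole_intensity lam) (Alt b - Alt a) = measure (bipole_intensity lam) (Alt b) - measure (bipole_intensity lam) (Alt a)"
    using Ale_props(4,5)[OF b] Ale_props(4)[OF assms(1)] assms by (intro measure_Diff) auto
  then show "measure (bipole_intensity lam) (Alt b - Alt a) = lam * pi * (b\<^sup>2 - a\<^sup>2)"
    using Ale_props(6)[OF b] Ale_props(6)[OF assms(1)] by (simp add: algebra_simps)
qed

definition "Z1 = (\<Union>n::nat. {\<omega>\<in>space M. infinite (N \<omega> \<inter> Ale (real n))})"
definition "Z2 = {\<omega>\<in>space M. N \<omega> \<inter> Ale 0 \<noteq> {}}"
definition "Z3 = (\<Inter>n::nat. {\<omega>\<in>space M. N \<omega> \<inter> Ale (real n) = {}})"
definition "Bnm n m = (\<Union>k\<in>{..n*m}. {\<omega>\<in>space M. \<not> (finite (N \<omega> \<inter> (Alt ((real k + 1) / real m) - Alt (real k / real m)))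
                 \<and> card (N \<omega> \<inter> (Alt ((real k + 1) / real m) - Alt (real k / real m))) \<le> 1)})"
definition "Z4 = (\<Union>n::nat. \<Inter>m::nat. Bnm n (Suc m))"

lemma Z1_null: "Z1 \<in> null_sets M"
proof -
  interpret prob_space M by (rule PS)
  have "{\<omega>\<in>space M. infinite (N \<omega> \<inter> Ale (real n))} \<in> null_sets M" for n
    using pp_finite(3,4)[OF PP Ale_props(1,2)[of "real n"]]
    by (simp add: null_sets_def emeasure_eq_measure)
  then show ?thesis unfolding Z1_def by (intro null_sets_UN) auto
qed

lemma Z2_null: "Z2 \<in> null_sets M"
proof -
  interpret prob_space M by (rule PS)
  have S: "{\<omega>\<in>space M. N \<omega> \<inter> Ale 0 = {}} \<in> sets M" and m: "measure M {\<omega>\<in>space M. N \<omega> \<inter> Ale 0 = {}} = 1"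
    using pp_empty[OF PP Ale_props(1,2)[of 0]] Ale_props(3)[of 0] by auto
  have e: "Z2 = space M - {\<omega>\<in>space M. N \<omega> \<inter> Ale 0 = {}}" unfolding Z2_def by auto
  have "measure M Z2 = 0" unfolding e using finite_measure_compl[OF S] m prob_space by simp
  moreover have "Z2 \<in> sets M" unfolding e using S by auto
  ultimately show ?thesis by (simp add: null_sets_def emeasure_eq_measure)
qed

lemma Z3_null: "Z3 \<in> null_sets M"
proof -
  interpret prob_space M by (rule PS)
  have S: "{\<omega>\<in>space M. N \<omega> \<inter> Ale (real n) = {}} \<in> sets M"
    and m: "measure M {\<omega>\<in>space M. N \<omega> \<inter> Ale (real n) = {}} = exp (- (lam * pi * (real n)\<^sup>2))" for n
    using pp_empty[OF PP Ale_props(1,2)[of "real n"]] Ale_props(3)[of "real n"] by auto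
  have Z3S: "Z3 \<in> sets M" unfolding Z3_def using S by auto
  have le: "measure M Z3 \<le> exp (- (lam * pi * (real n)\<^sup>2))" for n
  proof -
    have "measure M Z3 \<le> measure M {\<omega>\<in>space M. N \<omega> \<inter> Ale (real n) = {}}"
      using S by (intro finite_measure_mono) (auto simp: Z3_def)
    then show ?thesis using m by simp
  qed
  have lim: "(\<lambda>n. exp (- (lam * pi * (real n)\<^sup>2))) \<longlonglongrightarrow> 0"
    using lam by real_asymp
  have "measure M Z3 \<le> 0"
    by (rule LIMSEQ_le_const[OF lim]) (use le in auto)
  then have "measure M Z3 = 0" by (simp add: antisym)
  then show ?thesis using Z3S by (simp add: null_sets_def emeasure_eq_measure)
qed

lemma Bnm_bound:
  assumes m: "0 < m"
  shows "Bnm n m \<in> sets M" "measure M (Bnm n m) \<le> (real n + 1) * (lam * pi * (2 * real n + 1))\<^sup>2 / real m"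
proof -
  interpret prob_space M by (rule PS)
  define c where "c = lam * pi"
  have c0: "0 \<le> c" using lam by (simp add: c_def)
  define E where "E = (\<lambda>k::nat. {\<omega>\<in>space M. \<not> (finite (N \<omega> \<inter> (Alt ((real k + 1) / real m) - Alt (real k / real m)))
                 \<and> card (N \<omega> \<inter> (Alt ((real k + 1) / real m) - Alt (real k / real m))) \<le> 1)})"
  have B: "Bnm n m = (\<Union>k\<in>{..n*m}. E k)" unfolding Bnm_def E_def ..
  have ab: "0 \<le> real k / real m" "real k / real m \<le> (real k + 1) / real m" for k
    using m by (auto simp: divide_right_mono)
  have ES: "E k \<in> sets M" for k
    unfolding E_def by (rule pp_le1(1)[OF PP Ann_props(1,2)[OF ab]])
  have Em: "measure M (E k) \<le> (c * ((2 * real k + 1) / (real m)\<^sup>2))\<^sup>2" for k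
  proof -
    have "measure M (E k) \<le> (lam * pi * (((real k + 1) / real m)\<^sup>2 - (real k / real m)\<^sup>2))\<^sup>2"
      unfolding E_def using pp_le1(2)[OF PP Ann_props(1,2)[OF ab]] Ann_props(3)[OF ab] by simp
    also have "((real k + 1) / real m)\<^sup>2 - (real k / real m)\<^sup>2 = (2 * real k + 1) / (real m)\<^sup>2"
      using m by (simp add: field_simps power2_eq_square)
    finally show ?thesis by (simp add: c_def)
  qed
  have Ek: "measure M (E k) \<le> (c * ((2 * real n + 1) / real m))\<^sup>2" if "k \<in> {..n*m}" for k
  proof -
    have km: "real k \<le> real n * real m" using that by (simp flip: of_nat_mult)
    have m1: "1 \<le> real m" using m by simp
    have "(2 * real k + 1) / (real m)\<^sup>2 \<le> (2 * real n + 1) / real m"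
    proof -
      have "2 * real k + 1 \<le> (2 * real n + 1) * real m" using km m1 by (simp add: algebra_simps)
      then have "(2 * real k + 1) / (real m)\<^sup>2 \<le> ((2 * real n + 1) * real m) / (real m)\<^sup>2"
        by (intro divide_right_mono) auto
      also have "\<dots> = (2 * real n + 1) / real m" using m by (simp add: power2_eq_square)
      finally show ?thesis .
    qed
    then have "c * ((2 * real k + 1) / (real m)\<^sup>2) \<le> c * ((2 * real n + 1) / real m)"
      using c0 by (intro mult_left_mono) auto
    then have "(c * ((2 * real k + 1) / (real m)\<^sup>2))\<^sup>2 \<le> (c * ((2 * real n + 1) / real m))\<^sup>2"
      using c0 m by (intro power_mono) auto
    then show ?thesis using Em[of k] by simp
  qed
  show "Bnm n m \<in> sets M" unfolding B using ES by auto
  have "measure M (Bnm n m) \<le> (\<Sum>k\<in>{..n*m}. measure M (E k))"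
    unfolding B using ES by (intro finite_measure_subadditive_finite) auto
  also have "\<dots> \<le> of_nat (card {..n*m}) * (c * ((2 * real n + 1) / real m))\<^sup>2"
    by (rule sum_bounded_above) (rule Ek)
  also have "\<dots> = (real n * real m + 1) * (c * (2 * real n + 1))\<^sup>2 / (real m)\<^sup>2"
    using m by (simp add: power_divide power_mult_distrib field_simps)
  also have "\<dots> \<le> (real n + 1) * real m * (c * (2 * real n + 1))\<^sup>2 / (real m)\<^sup>2"
    using m by (intro divide_right_mono mult_right_mono) (auto simp: algebra_simps)
  also have "\<dots> = (real n + 1) * (lam * pi * (2 * real n + 1))\<^sup>2 / real m"
    using m by (simp add: c_def power2_eq_square field_simps)
  finally show "measure M (Bnm n m) \<le> (real n + 1) * (lam * pi * (2 * real n + 1))\<^sup>2 / real m" .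
qed

lemma Z4_null: "Z4 \<in> null_sets M"
proof -
  interpret prob_space M by (rule PS)
  have "(\<Inter>m::nat. Bnm n (Suc m)) \<in> null_sets M" for n
  proof -
    define C where "C = (real n + 1) * (lam * pi * (2 * real n + 1))\<^sup>2"
    have S: "(\<Inter>m::nat. Bnm n (Suc m)) \<in> sets M" using Bnm_bound(1) by auto
    have le: "measure M (\<Inter>m::nat. Bnm n (Suc m)) \<le> C / real (Suc m)" for m
    proof -
      have "measure M (\<Inter>m::nat. Bnm n (Suc m)) \<le> measure M (Bnm n (Suc m))"
        using Bnm_bound(1)[of "Suc m" n] by (intro finite_measure_mono) auto
      then show ?thesis using Bnm_bound(2)[of "Suc m" n] by (simp add: C_def)
    qed
    have lim: "(\<lambda>m. C / real (Suc m)) \<longlonglongrightarrow> 0" by real_asymp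
    have "measure M (\<Inter>m::nat. Bnm n (Suc m)) \<le> 0"
      by (rule LIMSEQ_le_const[OF lim]) (use le in auto)
    then have "measure M (\<Inter>m::nat. Bnm n (Suc m)) = 0" by (simp add: antisym)
    then show ?thesis using S by (simp add: null_sets_def emeasure_eq_measure)
  qed
  then show ?thesis unfolding Z4_def by (intro null_sets_UN) auto
qed

lemma tie_Z4:
  assumes w: "\<omega> \<in> space M" and pq: "p \<in> N \<omega>" "q \<in> N \<omega>" "p \<noteq> q" "D p = D q"
  shows "\<omega> \<in> Z4"
proof -
  define d where "d = D p"
  have d0: "0 \<le> d" by (simp add: d_def)
  define n where "n = nat \<lceil>d\<rceil>"
  have dn: "d \<le> real n" unfolding n_def using d0 by linarith
  have "\<omega> \<in> Bnm n (Suc m)" for m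
  proof -
    define mm where "mm = Suc m"
    have mm: "0 < real mm" "1 \<le> real mm" by (auto simp: mm_def)
    define k where "k = nat \<lfloor>d * real mm\<rfloor>"
    have dm0: "0 \<le> d * real mm" using d0 mm by simp
    have k1: "real k \<le> d * real mm" "d * real mm < real k + 1"
      unfolding k_def using dm0 by linarith+
    have "real k \<le> real n * real mm" using k1 dn mm by (meson mult_right_mono order.trans less_imp_le)
    then have kn: "k \<le> n * mm" by (simp flip: of_nat_mult)
    have in1: "real k / real mm \<le> d" using k1 mm by (simp add: divide_le_eq)
    have in2: "d < (real k + 1) / real mm" using k1 mm by (simp add: less_divide_eq)
    let ?A = "Alt ((real k + 1) / real mm) - Alt (real k / real mm)"
    have "p \<in> ?A" "q \<in> ?A" using in1 in2 pq by (auto simp: d_def)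
    then have "\<not> (finite (N \<omega> \<inter> ?A) \<and> card (N \<omega> \<inter> ?A) \<le> 1)"
    proof (intro notI, elim conjE)
      assume "p \<in> ?A" "q \<in> ?A" "finite (N \<omega> \<inter> ?A)" "card (N \<omega> \<inter> ?A) \<le> 1"
      moreover have "{p, q} \<subseteq> N \<omega> \<inter> ?A" using \<open>p \<in> ?A\<close> \<open>q \<in> ?A\<close> pq by auto
      ultimately have "card {p, q} \<le> 1" using card_mono order_trans by blast
      then show False using pq by simp
    qed
    then show ?thesis unfolding Bnm_def mm_def[symmetric] using kn w by blast
  qed
  then show ?thesis unfolding Z4_def by blast
qed

definition "Zall = Z1 \<union> Z2 \<union> Z3 \<union> Z4"

lemma Zall_null: "Zall \<in> null_sets M"
  unfolding Zall_def using Z1_null Z2_null Z3_null Z4_null by auto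

lemma good_min:
  assumes w: "\<omega> \<in> space M" "\<omega> \<notin> Zall"
  obtains p0 where "p0 \<in> N \<omega>" "0 < D p0" "\<And>q. q \<in> N \<omega> \<Longrightarrow> q \<noteq> p0 \<Longrightarrow> D p0 < D q"
proof -
  have nZ1: "\<omega> \<notin> Z1" and nZ2: "\<omega> \<notin> Z2" and nZ3: "\<omega> \<notin> Z3" and nZ4: "\<omega> \<notin> Z4"
    using w(2) by (auto simp: Zall_def)
  obtain n :: nat where ne: "N \<omega> \<inter> Ale (real n) \<noteq> {}" using nZ3 w(1) unfolding Z3_def by blast
  have fin: "finite (N \<omega> \<inter> Ale (real n))" using nZ1 w(1) unfolding Z1_def by blast
  define S where "S = N \<omega> \<inter> Ale (real n)"
  have Sf: "finite (D ` S)" "D ` S \<noteq> {}" using fin ne by (auto simp: S_def)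
  obtain p0 where p0S: "p0 \<in> S" and p0m: "D p0 = Min (D ` S)" using Min_in[OF Sf] by auto
  have le: "D p0 \<le> D q" if "q \<in> N \<omega>" for q
  proof (cases "q \<in> Ale (real n)")
    case True
    then have "q \<in> S" using that by (simp add: S_def)
    then show ?thesis using p0m Sf(1) by simp
  next
    case False
    then show ?thesis using p0S by (simp add: S_def)
  qed
  have p0N: "p0 \<in> N \<omega>" using p0S by (simp add: S_def)
  have pos: "0 < D p0"
  proof (rule ccontr)
    assume "\<not> 0 < D p0"
    then have "p0 \<in> N \<omega> \<inter> Ale 0" using p0N by auto
    then show False using nZ2 w(1) unfolding Z2_def by blast
  qed
  have strict: "D p0 < D q" if "q \<in> N \<omega>" "q \<noteq> p0" for q
  proof -
    have "D p0 \<noteq> D q" using tie_Z4[OF w(1) p0N that(1)] that(2) nZ4 by auto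
    then show ?thesis using le[OF that(1)] by simp
  qed
  show ?thesis using that p0N pos strict by blast
qed

lemma good_psi:
  assumes w: "\<omega> \<in> space M" "\<omega> \<notin> Zall"
  defines "R \<equiv> closest_rx r (N \<omega>)"
  shows "0 < R"
    "\<And>\<rho>. 0 \<le> \<rho> \<Longrightarrow> \<rho> < 1 \<Longrightarrow> (\<rho> < psi_R1 lam T r \<beta> (N \<omega>) \<longleftrightarrow>
             \<rho> / (R powr \<beta> / (T * r powr \<beta>) + 1 - \<rho>) + I_fun lam T r \<beta> \<rho> R < 1)"
    "psi_R1 lam T r \<beta> (N \<omega>) = 1 \<longleftrightarrow>
             1 / (R powr \<beta> / (T * r powr \<beta>) + 1 - 1) + I_fun lam T r \<beta> 1 R \<le> 1"
    "\<And>a. N \<omega> \<inter> Ale a = {} \<longleftrightarrow> a < R"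
    "\<And>a. N \<omega> \<inter> Alt a = {} \<longleftrightarrow> a \<le> R"
proof -
  obtain p0 where p0: "p0 \<in> N \<omega>" "0 < D p0" "\<And>q. q \<in> N \<omega> \<Longrightarrow> q \<noteq> p0 \<Longrightarrow> D p0 < D q"
    using good_min[OF w] by blast
  have le: "D p0 \<le> D q" if "q \<in> N \<omega>" for q using p0(3)[OF that] by (cases "q = p0") auto
  have RD: "R = D p0"
    unfolding R_def closest_rx_def
    by (rule cInf_eq_minimum) (use p0(1) le in auto)
  show "0 < R" using RD p0(2) by simp
  have Y: "receiver r ` N \<omega> \<inter> cball 0 R = {receiver r p0}"
  proof
    show "{receiver r p0} \<subseteq> receiver r ` N \<omega> \<inter> cball 0 R" using p0(1) RD by auto
    show "receiver r ` N \<omega> \<inter> cball 0 R \<subseteq> {receiver r p0}"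
    proof
      fix y assume "y \<in> receiver r ` N \<omega> \<inter> cball 0 R"
      then obtain q where q: "q \<in> N \<omega>" "y = receiver r q" "D q \<le> R" by auto
      then have "q = p0" using p0(3)[OF q(1)] RD by (cases "q = p0") auto
      then show "y \<in> {receiver r p0}" using q by simp
    qed
  qed
  have ps: "psi_R1 lam T r \<beta> (N \<omega>) = opt_MAP lam T r \<beta> (receiver r ` N \<omega>) (cball 0 R)"
    unfolding psi_R1_def R_def ..
  have y0: "cmod (receiver r p0) = R" using RD by simp
  note PC = psi_char[OF lam T r \<beta> \<open>0 < R\<close> Y y0]
  show "\<And>\<rho>. 0 \<le> \<rho> \<Longrightarrow> \<rho> < 1 \<Longrightarrow> (\<rho> < psi_R1 lam T r \<beta> (N \<omega>) \<longleftrightarrow>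
             \<rho> / (R powr \<beta> / (T * r powr \<beta>) + 1 - \<rho>) + I_fun lam T r \<beta> \<rho> R < 1)"
    unfolding ps by (rule PC(1))
  show "psi_R1 lam T r \<beta> (N \<omega>) = 1 \<longleftrightarrow>
             1 / (R powr \<beta> / (T * r powr \<beta>) + 1 - 1) + I_fun lam T r \<beta> 1 R \<le> 1"
    unfolding ps by (rule PC(2))
  show "N \<omega> \<inter> Ale a = {} \<longleftrightarrow> a < R" for a
  proof
    assume "N \<omega> \<inter> Ale a = {}" then show "a < R" using p0(1) RD by (auto simp: not_le)
  next
    assume "a < R" then show "N \<omega> \<inter> Ale a = {}" using le RD by force
  qed
  show "N \<omega> \<inter> Alt a = {} \<longleftrightarrow> a \<le> R" for a
  proof
    assume "N \<omega> \<inter> Alt a = {}" then show "a \<le> R" using p0(1) RD by (auto simp: not_less)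
  next
    assume "a \<le> R" then show "N \<omega> \<inter> Alt a = {}" using le RD by force
  qed
qed

lemma event_meas:
  assumes S: "S \<subseteq> space M"
    and hS: "\<And>\<omega>. \<omega> \<in> space M \<Longrightarrow> \<omega> \<notin> Zall \<Longrightarrow> (\<omega> \<in> S \<longleftrightarrow> closest_rx r (N \<omega>) \<in> W)"
    and \<xi>0: "0 \<le> \<xi>" and W1: "\<And>x. \<xi> < x \<Longrightarrow> x \<in> W" and W2: "\<And>x. x \<in> W \<Longrightarrow> \<xi> \<le> x"
  shows "measure (completion M) S = exp (- lam * pi * \<xi>\<^sup>2)"
proof -
  define B1 where "B1 = {\<omega>\<in>space M. N \<omega> \<inter> Ale \<xi> = {}}"
  define B2 where "B2 = {\<omega>\<in>space M. N \<omega> \<inter> Alt \<xi> = {}}"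
  have Zs: "Zall \<in> sets M" "measure M Zall = 0" using Zall_null by (auto simp: null_sets_def measure_def)
  have B1: "B1 \<in> sets M" "measure M B1 = exp (- lam * pi * \<xi>\<^sup>2)"
    unfolding B1_def using pp_empty[OF PP Ale_props(1,2)[OF \<xi>0]] Ale_props(3)[OF \<xi>0] by auto
  have B2: "B2 \<in> sets M" "measure M B2 = exp (- lam * pi * \<xi>\<^sup>2)"
    unfolding B2_def using pp_empty[OF PP Ale_props(4,5)[OF \<xi>0]] Ale_props(6)[OF \<xi>0] by auto
  show ?thesis
  proof (rule squeeze[OF PS B1(1) B2(1) Zs S _ _ _ B1(2) B2(2)])
    show "B1 - Zall \<subseteq> S"
    proof
      fix \<omega> assume a: "\<omega> \<in> B1 - Zall"
      then have w: "\<omega> \<in> space M" "\<omega> \<notin> Zall" by (auto simp: B1_def)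
      have "\<xi> < closest_rx r (N \<omega>)" using good_psi(4)[OF w, of \<xi>] a by (auto simp: B1_def)
      then show "\<omega> \<in> S" using hS[OF w] W1 by blast
    qed
    show "S - Zall \<subseteq> B2"
    proof
      fix \<omega> assume a: "\<omega> \<in> S - Zall"
      then have w: "\<omega> \<in> space M" "\<omega> \<notin> Zall" using S by auto
      have "\<xi> \<le> closest_rx r (N \<omega>)" using hS[OF w] a W2 by blast
      then show "\<omega> \<in> B2" using good_psi(5)[OF w, of \<xi>] w by (auto simp: B2_def)
    qed
    show "B1 \<subseteq> B2" unfolding B1_def B2_def by auto
  qed
qed

lemma inf_props:
  fixes W :: "real set"
  assumes ne: "W \<noteq> {}" and pos': "\<forall>x\<in>W. 0 < x" and up': "\<forall>x y. x \<in> W \<longrightarrow> x \<le> y \<longrightarrow> y \<in> W"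
  shows "0 \<le> Inf W" "\<And>x. Inf W < x \<Longrightarrow> x \<in> W" "\<And>x. x \<in> W \<Longrightarrow> Inf W \<le> x"
proof -
  have pos: "0 < x" if "x \<in> W" for x using pos' that by blast
  have up: "y \<in> W" if "x \<in> W" "x \<le> y" for x y using up' that by blast
  have bdd: "bdd_below W" by (rule bdd_belowI[where m=0]) (use pos in \<open>auto intro: less_imp_le\<close>)
  show "0 \<le> Inf W" using ne pos by (intro cInf_greatest) (auto intro: less_imp_le)
  show "Inf W < x \<Longrightarrow> x \<in> W" for x
  proof -
    assume "Inf W < x"
    then obtain u where "u \<in> W" "u < x" using cInf_less_iff[OF ne bdd] by blast
    then show "x \<in> W" using up by auto
  qed
  show "Inf W \<le> x" if "x \<in> W" for x by (rule cInf_lower[OF that bdd])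
qed

lemma main_thm:
  shows "(\<forall>\<rho>. 0 \<le> \<rho> \<and> \<rho> < 1 \<longrightarrow>
            measure (completion M) {\<omega>\<in>space M. \<rho> < psi_R1 lam T r \<beta> (N \<omega>)}
              = exp (- lam * pi * (xi lam T r \<beta> \<rho>)\<^sup>2))
       \<and> measure (completion M) {\<omega>\<in>space M. psi_R1 lam T r \<beta> (N \<omega>) = 1}
              = exp (- lam * pi * (xi lam T r \<beta> 1)\<^sup>2)"
proof (intro conjI allI impI)
  fix \<rho> :: real assume \<rho>: "0 \<le> \<rho> \<and> \<rho> < 1"
  define F where "F = (\<lambda>x. \<rho> / (x powr \<beta> / (T * r powr \<beta>) + 1 - \<rho>) + I_fun lam T r \<beta> \<rho> x)"
  define W where "W = {x. 0 < x \<and> F x < 1}"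
  have xiW: "xi lam T r \<beta> \<rho> = Inf W" unfolding xi_def W_def F_def ..
  have Fm: "F x2 \<le> F x1" if "0 < x1" "x1 \<le> x2" for x1 x2
    using F_props(1)[OF lam T r \<beta>, of \<rho> x1 x2] \<rho> that by (simp add: F_def)
  have Fe: "\<exists>x>0. F x < 1"
    using F_props(3)[OF lam T r \<beta>, of \<rho>] \<rho> by (simp add: F_def)
  have ne: "W \<noteq> {}" using Fe by (auto simp: W_def)
  have up: "y \<in> W" if "x \<in> W" "x \<le> y" for x y
    using that Fm[of x y] by (auto simp: W_def)
  have pos: "\<forall>x\<in>W. 0 < x" by (simp add: W_def)
  have up': "\<forall>x y. x \<in> W \<longrightarrow> x \<le> y \<longrightarrow> y \<in> W" using up by blast
  note IP = inf_props[OF ne pos up']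
  show "measure (completion M) {\<omega>\<in>space M. \<rho> < psi_R1 lam T r \<beta> (N \<omega>)} = exp (- lam * pi * (xi lam T r \<beta> \<rho>)\<^sup>2)"
    unfolding xiW
  proof (rule event_meas[where W=W])
    show "{\<omega>\<in>space M. \<rho> < psi_R1 lam T r \<beta> (N \<omega>)} \<subseteq> space M" by auto
    show "\<omega> \<in> {\<omega>\<in>space M. \<rho> < psi_R1 lam T r \<beta> (N \<omega>)} \<longleftrightarrow> closest_rx r (N \<omega>) \<in> W"
      if "\<omega> \<in> space M" "\<omega> \<notin> Zall" for \<omega>
      using good_psi(1)[OF that] good_psi(2)[OF that, of \<rho>] \<rho> that(1) by (auto simp: W_def F_def)
    show "0 \<le> Inf W" by (rule IP(1))
    show "x \<in> W" if "Inf W < x" for x by (rule IP(2)[OF that])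
    show "Inf W \<le> x" if "x \<in> W" for x using that by (rule IP(3))
  qed
next
  define F where "F = (\<lambda>x. 1 / (x powr \<beta> / (T * r powr \<beta>) + 1 - 1) + I_fun lam T r \<beta> 1 x)"
  define U where "U = {x. 0 < x \<and> F x < 1}"
  define V where "V = {x. 0 < x \<and> F x \<le> 1}"
  have xiU: "xi lam T r \<beta> 1 = Inf U" unfolding xi_def U_def F_def ..
  have Fm: "F x2 \<le> F x1" if "0 < x1" "x1 \<le> x2" for x1 x2
    using F_props(1)[OF lam T r \<beta>, of 1 x1 x2] that unfolding F_def by simp
  have Fs: "F x2 < F x1" if "0 < x1" "x1 < x2" for x1 x2
    using F_props(2)[OF lam T r \<beta>, of 1 x1 x2] that unfolding F_def by simp
  have Fe: "\<exists>x>0. F x < 1"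
    using F_props(3)[OF lam T r \<beta>, of 1] unfolding F_def by simp
  have ne: "U \<noteq> {}" using Fe by (auto simp: U_def)
  have up: "y \<in> U" if "x \<in> U" "x \<le> y" for x y
    using that Fm[of x y] by (auto simp: U_def)
  have pos: "\<forall>x\<in>U. 0 < x" by (simp add: U_def)
  have up': "\<forall>x y. x \<in> U \<longrightarrow> x \<le> y \<longrightarrow> y \<in> U" using up by blast
  note IP = inf_props[OF ne pos up']
  have IP1: "0 \<le> Inf U" by (rule IP(1))
  have IP2: "x \<in> U" if "Inf U < x" for x using that by (rule IP(2))
  have IP3: "Inf U \<le> x" if "x \<in> U" for x using that by (rule IP(3))
  show "measure (completion M) {\<omega>\<in>space M. psi_R1 lam T r \<beta> (N \<omega>) = 1} = exp (- lam * pi * (xi lam T r \<beta> 1)\<^sup>2)"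
    unfolding xiU
  proof (rule event_meas[where W = V])
    show "{\<omega>\<in>space M. psi_R1 lam T r \<beta> (N \<omega>) = 1} \<subseteq> space M" by auto
    show "\<omega> \<in> {\<omega>\<in>space M. psi_R1 lam T r \<beta> (N \<omega>) = 1} \<longleftrightarrow> closest_rx r (N \<omega>) \<in> V"
      if "\<omega> \<in> space M" "\<omega> \<notin> Zall" for \<omega>
      using good_psi(1)[OF that] good_psi(3)[OF that] that(1) unfolding V_def F_def by auto
    show "0 \<le> Inf U" by (rule IP1)
    show "x \<in> V" if "Inf U < x" for x using IP2[OF that] unfolding U_def V_def by simp
    show "Inf U \<le> x" if "x \<in> V" for x
    proof (rule ccontr)
      assume "\<not> Inf U \<le> x"
      then have xl: "x < Inf U" by simp
      define y where "y = (x + Inf U) / 2"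
      have x0: "0 < x" "F x \<le> 1" using that by (auto simp: V_def)
      have "x < y" "y < Inf U" using xl by (auto simp: y_def)
      then have "F y < F x" using Fs[OF x0(1)] by blast
      then have "y \<in> U" using x0 \<open>x < y\<close> by (auto simp: U_def)
      then show False using IP3[OF \<open>y \<in> U\<close>] \<open>y < Inf U\<close> by linarith
    qed
  qed
qed

end

theorem theorem4p3:
  fixes M :: "'w measure" and N :: "'w \<Rightarrow> (complex \<times> real) set"
    and lam T r \<beta> :: real
  assumes "0 < lam" and "0 < T" and "0 < r" and "2 < \<beta>"
    and "poisson_pp M (bipole_intensity lam) N"
  shows "(\<forall>\<rho>. 0 \<le> \<rho> \<and> \<rho> < 1 \<longrightarrow>
            measure (completion M) {\<omega>\<in>space M. \<rho> < psi_R1 lam T r \<beta> (N \<omega>)}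
              = exp (- lam * pi * (xi lam T r \<beta> \<rho>)\<^sup>2))
       \<and> measure (completion M) {\<omega>\<in>space M. psi_R1 lam T r \<beta> (N \<omega>) = 1}
              = exp (- lam * pi * (xi lam T r \<beta> 1)\<^sup>2)"
  by (rule main_thm[OF assms])

end
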